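(* Let $V(1),\dots,V(T)\in\mathbb R^p$ and $0=\nu_0<\nu_1<\dots<\nu_M=T$ be such that $V(\nu_m+1)=\dots=V(\nu_{m+1})$ for all $m=0,\dots,M-1$. Let $\Delta$ be a positive integer and suppose $\nu=\nu_m$ for some $1\le m\le M-1$ satisfies $|\nu_m-\nu_{m'}|\ge\Delta$ for all $m'\ne m$. With \[ \widetilde V(t)=\sqrt{\frac{T-t}{Tt}}\sum_{r=1}^tV(r)-\sqrt{\frac{t}{T(T-t)}}\sum_{r=t+1}^TV(r),\qquad t\in\{1,\dots,T-1\}, \] it holds that \[ \max_{1\le t\le T-1}\|\widetilde V(t)\|^2\ \ge\ \frac{\|V(\nu)-V(\nu+1)\|^2\Delta^2}{48T}. \]
   Context: $\|\cdot\|$ is the Euclidean norm. *)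

theory Defs
  imports "HOL-Analysis.Analysis"
begin

definition Vtilde :: "(nat \<Rightarrow> real ^ 'p) \<Rightarrow> nat \<Rightarrow> nat \<Rightarrow> real ^ 'p" where
  "Vtilde V T t =
     sqrt ((real T - real t) / (real T * real t)) *\<^sub>R (\<Sum>r=1..t. V r)
   - sqrt (real t / (real T * (real T - real t))) *\<^sub>R (\<Sum>r=t+1..T. V r)"

end

theory Submission
  imports Defs
begin

lemma vt_eq:
  fixes V :: "nat \<Rightarrow> real ^ 'p"
  assumes t1: "1 \<le> t" and tT: "t < T"
  shows "Vtilde V T t = sqrt (real T / (real t * (real T - real t))) *\<^sub>R
     ((\<Sum>r=1..t. V r) - (real t / real T) *\<^sub>R (\<Sum>r=1..T. V r))"
proof -
  define k where "k = sqrt (real T / (real t * (real T - real t)))"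
  have tp: "real t > 0" "real T - real t > 0" "real T > 0" using t1 tT by auto
  have split: "(\<Sum>r=1..T. V r) = (\<Sum>r=1..t. V r) + (\<Sum>r=t+1..T. V r)"
  proof -
    have "(\<Sum>r=1..t + (T - t). V r) = (\<Sum>r=1..t. V r) + (\<Sum>r=t+1..t + (T - t). V r)"
      by (rule sum.ub_add_nat) (use t1 in simp)
    then show ?thesis using tT by simp
  qed
  have e1: "(real T - real t) / (real T * real t) = real T / (real t * (real T - real t)) * ((real T - real t)/real T)^2"
    using tp by (simp add: field_simps power2_eq_square)
  have e2: "real t / (real T * (real T - real t)) = real T / (real t * (real T - real t)) * (real t/real T)^2"
    using tp by (simp add: field_simps power2_eq_square)
  have s1: "sqrt ((real T - real t) / (real T * real t)) = k * ((real T - real t)/real T)"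
    unfolding e1 k_def real_sqrt_mult using tp by simp
  have s2: "sqrt (real t / (real T * (real T - real t))) = k * (real t/real T)"
    unfolding e2 k_def real_sqrt_mult using tp by simp
  have "Vtilde V T t = (k * ((real T - real t)/real T)) *\<^sub>R (\<Sum>r=1..t. V r)
     - (k * (real t/real T)) *\<^sub>R ((\<Sum>r=1..T. V r) - (\<Sum>r=1..t. V r))"
    unfolding Vtilde_def s1 s2 split by simp
  also have "\<dots> = k *\<^sub>R ((((real T - real t)/real T) + real t/real T) *\<^sub>R (\<Sum>r=1..t. V r)
     - (real t / real T) *\<^sub>R (\<Sum>r=1..T. V r))"
    by (simp add: algebra_simps scaleR_add_left)
  also have "((real T - real t)/real T) + real t/real T = 1" using tp by (simp add: field_simps)
  finally show ?thesis unfolding k_def by simp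
qed

theorem lemma15:
  fixes V :: "nat \<Rightarrow> real ^ 'p"
    and T M \<Delta> m :: nat
    and \<nu> :: "nat \<Rightarrow> nat"
  assumes nu0: "\<nu> 0 = 0"
    and nuM: "\<nu> M = T"
    and nu_mono: "\<And>i. i < M \<Longrightarrow> \<nu> i < \<nu> (Suc i)"
    and const: "\<And>i t. i < M \<Longrightarrow> \<nu> i + 1 \<le> t \<Longrightarrow> t \<le> \<nu> (Suc i) \<Longrightarrow> V t = V (\<nu> i + 1)"
    and Delta_pos: "\<Delta> > 0"
    and m_range: "1 \<le> m" "m \<le> M - 1"
    and sep: "\<And>m'. m' \<le> M \<Longrightarrow> m' \<noteq> m \<Longrightarrow> \<bar>int (\<nu> m) - int (\<nu> m')\<bar> \<ge> int \<Delta>"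
  shows "(Max ((\<lambda>t. (norm (Vtilde V T t))\<^sup>2) ` {1..T-1}))
           \<ge> (norm (V (\<nu> m) - V (\<nu> m + 1)))\<^sup>2 * (real \<Delta>)\<^sup>2 / (48 * real T)"
proof -
  define n where "n = \<nu> m"
  define a where "a = V n"
  define b where "b = V (n + 1)"
  have mono: "\<nu> m \<le> \<nu> (m + k)" if "m + k \<le> M" for k
    using that
  proof (induction k)
    case 0 then show ?case by simp
  next
    case (Suc k)
    then have "\<nu> (m + k) < \<nu> (Suc (m + k))" using nu_mono by simp
    with Suc show ?case by simp
  qed
  have "\<nu> m \<le> \<nu> (m + (M - m))" using mono[of "M - m"] m_range by simp
  then have nT: "n \<le> T" using m_range nuM n_def by simp
  have "\<bar>int n - int T\<bar> \<ge> int \<Delta>" using sep[of M] m_range nuM n_def by fastforce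
  with nT have nD2: "n + \<Delta> \<le> T" by linarith
  have "\<bar>int n - int (\<nu> (m-1))\<bar> \<ge> int \<Delta>" using sep[of "m-1"] m_range n_def by fastforce
  moreover have "\<nu> (m-1) < n" using nu_mono[of "m-1"] m_range n_def by simp
  ultimately have lowD: "\<nu> (m-1) + \<Delta> \<le> n" by linarith
  have "\<bar>int n - int (\<nu> (m+1))\<bar> \<ge> int \<Delta>" using sep[of "m+1"] m_range n_def by fastforce
  moreover have "n < \<nu> (m+1)" using nu_mono[of "m"] m_range n_def by simp
  ultimately have upD: "n + \<Delta> \<le> \<nu> (m+1)" by linarith
  have nD: "\<Delta> \<le> n" using lowD by simp
  have Va: "V t = a" if "n - \<Delta> + 1 \<le> t" "t \<le> n" for t
  proof -
    have "V t = V (\<nu> (m-1) + 1)" using const[of "m-1" t] that lowD m_range n_def by simp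
    moreover have "V n = V (\<nu> (m-1) + 1)" using const[of "m-1" n] lowD m_range n_def Delta_pos by simp
    ultimately show ?thesis unfolding a_def by simp
  qed
  have Vb: "V t = b" if "n + 1 \<le> t" "t \<le> n + \<Delta>" for t
    using const[of m t] that upD m_range n_def b_def by simp
  define S where "S t = (\<Sum>r=1..t. V r)" for t
  define C where "C t = S t - (real t / real T) *\<^sub>R S T" for t
  have Sadd: "S (x + k) = S x + (\<Sum>r=x+1..x+k. V r)" for x k
    unfolding S_def by (rule sum.ub_add_nat) simp
  have d1: "S (n + \<Delta>) - S n = real \<Delta> *\<^sub>R b"
  proof -
    have "(\<Sum>r=n+1..n+\<Delta>. V r) = (\<Sum>r=n+1..n+\<Delta>. b)" using Vb by (intro sum.cong) auto
    then show ?thesis using Sadd[of n \<Delta>] by (simp add: scaleR_conv_of_real)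
  qed
  have d2: "S n - S (n - \<Delta>) = real \<Delta> *\<^sub>R a"
  proof -
    have "(\<Sum>r=n-\<Delta>+1..n-\<Delta>+\<Delta>. V r) = (\<Sum>r=n-\<Delta>+1..n-\<Delta>+\<Delta>. a)" using Va nD by (intro sum.cong) auto
    then show ?thesis using Sadd[of "n-\<Delta>" \<Delta>] nD by (simp add: scaleR_conv_of_real)
  qed
  have lin: "real (n + \<Delta>) / real T - 2 * (real n / real T) + real (n - \<Delta>) / real T = 0"
    using nD by (simp add: of_nat_diff add_divide_distrib[symmetric] diff_divide_distrib[symmetric])
  have sd: "C (n + \<Delta>) - 2 *\<^sub>R C n + C (n - \<Delta>) = real \<Delta> *\<^sub>R (b - a)"
  proof -
    have "C (n + \<Delta>) - 2 *\<^sub>R C n + C (n - \<Delta>) = (S (n + \<Delta>) - S n) - (S n - S (n - \<Delta>))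
       - (real (n + \<Delta>) / real T - 2 * (real n / real T) + real (n - \<Delta>) / real T) *\<^sub>R S T"
      unfolding C_def by (simp add: scaleR_2 algebra_simps scaleR_add_left scaleR_diff_left)
    then show ?thesis unfolding d1 d2 lin by (simp add: algebra_simps)
  qed
  have C0: "C 0 = 0" unfolding C_def S_def by simp
  have Tpos: "real T > 0" using nD2 Delta_pos by simp
  have CT: "C T = 0" unfolding C_def using Tpos by simp
  have tri: "real \<Delta> * norm (b - a) \<le> norm (C (n + \<Delta>)) + 2 * norm (C n) + norm (C (n - \<Delta>))"
  proof -
    have "real \<Delta> * norm (b - a) = norm (C (n + \<Delta>) - 2 *\<^sub>R C n + C (n - \<Delta>))" using sd by simp
    also have "\<dots> \<le> norm (C (n + \<Delta>) - 2 *\<^sub>R C n) + norm (C (n - \<Delta>))" by (rule norm_triangle_ineq)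
    also have "norm (C (n + \<Delta>) - 2 *\<^sub>R C n) \<le> norm (C (n + \<Delta>)) + norm (2 *\<^sub>R C n)" by (rule norm_triangle_ineq4)
    finally show ?thesis by simp
  qed
  obtain t where tin: "t \<in> {n - \<Delta>, n, n + \<Delta>}" and tbig: "real \<Delta> * norm (b - a) \<le> 4 * norm (C t)"
  proof -
    consider "norm (C (n + \<Delta>)) \<ge> norm (C n) \<and> norm (C (n + \<Delta>)) \<ge> norm (C (n - \<Delta>))"
      | "norm (C n) \<ge> norm (C (n + \<Delta>)) \<and> norm (C n) \<ge> norm (C (n - \<Delta>))"
      | "norm (C (n - \<Delta>)) \<ge> norm (C n) \<and> norm (C (n - \<Delta>)) \<ge> norm (C (n + \<Delta>))" by linarith
    then show ?thesis using that tri by cases fastforce+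
  qed
  have tT: "t \<le> T" using tin nD2 by auto
  have key: "\<exists>t. t \<in> {1..T-1} \<and> real \<Delta> * norm (b - a) \<le> 4 * norm (C t)"
  proof (cases "a = b")
    case True
    show ?thesis by (rule exI[of _ n]) (use True nD nD2 Delta_pos in auto)
  next
    case False
    then have "norm (C t) > 0" using tbig Delta_pos
    proof -
      have "real \<Delta> * norm (b - a) > 0" using False Delta_pos by simp
      then show ?thesis using tbig by linarith
    qed
    then have "t \<noteq> 0" "t \<noteq> T" using C0 CT by (metis norm_zero less_irrefl)+
    then show ?thesis using tbig tT by (intro exI[of _ t]) auto
  qed
  then obtain s where sin: "s \<in> {1..T-1}" and sbig: "real \<Delta> * norm (b - a) \<le> 4 * norm (C s)" by blast
  have s1: "1 \<le> s" and sT: "s < T" using sin by auto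
  have rs: "real s > 0" "real T - real s > 0" using s1 sT by auto
  have vt: "Vtilde V T s = sqrt (real T / (real s * (real T - real s))) *\<^sub>R C s"
    using vt_eq[OF s1 sT, of V] unfolding C_def S_def by simp
  have nv: "(norm (Vtilde V T s))\<^sup>2 = real T / (real s * (real T - real s)) * (norm (C s))\<^sup>2"
    unfolding vt using rs Tpos by (simp add: power_mult_distrib)
  have "4 * (real s * (real T - real s)) \<le> real T * real T"
  proof -
    have "0 \<le> (real T - 2 * real s)^2" by simp
    then show ?thesis by (simp add: power2_eq_square algebra_simps)
  qed
  then have coef: "4 / real T \<le> real T / (real s * (real T - real s))"
    using rs Tpos by (simp add: field_simps)
  have sq: "(real \<Delta> * norm (b - a))\<^sup>2 \<le> (4 * norm (C s))\<^sup>2"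
    using sbig by (intro power_mono) auto
  have "(norm (V (\<nu> m) - V (\<nu> m + 1)))\<^sup>2 * (real \<Delta>)\<^sup>2 / (48 * real T)
       \<le> (norm (b - a))\<^sup>2 * (real \<Delta>)\<^sup>2 / (4 * real T)"
    using Tpos unfolding a_def b_def n_def
    by (simp add: norm_minus_commute divide_left_mono frac_le)
  also have "\<dots> = (4 / real T) * ((real \<Delta> * norm (b - a))\<^sup>2 / 16)"
    using Tpos by (simp add: field_simps power_mult_distrib)
  also have "\<dots> \<le> (4 / real T) * (norm (C s))\<^sup>2"
    using sq Tpos by (intro mult_left_mono) (auto simp: power_mult_distrib)
  also have "\<dots> \<le> real T / (real s * (real T - real s)) * (norm (C s))\<^sup>2"
    using coef by (intro mult_right_mono) auto
  also have "\<dots> = (norm (Vtilde V T s))\<^sup>2" using nv by simp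
  also have "\<dots> \<le> Max ((\<lambda>t. (norm (Vtilde V T t))\<^sup>2) ` {1..T-1})"
    using sin by (intro Max_ge) auto
  finally show ?thesis .
qed

end
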